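(* Let $n\ge 2$ and let $X_{1},\dots,X_{n}\in[0,1]$ be IID real random variables with common law $F$, and let $X\sim F$. Then for every $\delta\in(0,1)$, each of the following two inequalities holds with probability at least $1-\delta$: \[ \sqrt{S_{n}^{2}}\le\sqrt{\mathbb{V}_{F}X}+\left(\frac{\sqrt{2}}{2}+\frac{\sqrt{6}}{6}\right)\sqrt{\frac{1}{\lfloor n/2\rfloor}\log\frac{1}{\delta}}, \] \[ \sqrt{\mathbb{V}_{F}X}\le\sqrt{S_{n}^{2}}+\left(\frac{\sqrt{2}}{2}+\frac{\sqrt{42}}{6}\right)\sqrt{\frac{1}{\lfloor n/2\rfloor}\log\frac{1}{\delta}}. \]
   Context: $\bar X_n=n^{-1}\sum_{i=1}^n X_i$ and $S_{n}^{2}=(n-1)^{-1}\sum_{i=1}^{n}(X_{i}-\bar{X}_{n})^{2}$ is the unbiased sample variance. $\mathbb{V}_F X$ denotes the variance of $X\sim F$. $\lfloor\cdot\rfloor$ is the floor function. *)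

theory Defs
  imports "HOL-Probability.Probability"
begin

definition sample_mean :: "nat \<Rightarrow> (nat \<Rightarrow> 'a \<Rightarrow> real) \<Rightarrow> 'a \<Rightarrow> real" where
  "sample_mean n X w = (\<Sum>i<n. X i w) / real n"

definition sample_var :: "nat \<Rightarrow> (nat \<Rightarrow> 'a \<Rightarrow> real) \<Rightarrow> 'a \<Rightarrow> real" where
  "sample_var n X w = (\<Sum>i<n. (X i w - sample_mean n X w)\<^sup>2) / (real n - 1)"

definition law_variance :: "real measure \<Rightarrow> real" where
  "law_variance F = (\<integral>x. (x - (\<integral>y. y \<partial>F))\<^sup>2 \<partial>F)"

end

theory Submission
  imports Defs "HOL-Number_Theory.Cong"
begin


lemma rr_inj:
  fixes N r x y :: nat
  assumes "x < N" "y < N" "(r + x) mod N = (r + y) mod N"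
  shows "x = y"
proof -
  have "[r + x = r + y] (mod N)" using assms(3) by (simp add: cong_def)
  then have "[x = y] (mod N)" by (simp add: cong_add_lcancel_nat)
  then show ?thesis using assms cong_less_modulus_unique_nat by blast
qed

lemma rr_ne:
  fixes N r x y :: nat
  assumes "x < N" "y < N" "x \<noteq> y"
  shows "(r + x) mod N \<noteq> (r + y) mod N"
  using rr_inj[of x N y r] assms by blast

lemma rr_phi_inj0:
  fixes N r d r' d' :: nat
  assumes oddN: "odd N"
  assumes r: "r < N" "r' < N" and d: "1 \<le> d" "d < N" "1 \<le> d'" "d' < N"
    and e1: "(r + d) mod N = (r' + d') mod N" and e2: "(r + (N - d)) mod N = (r' + (N - d')) mod N"
  shows "r = r' \<and> d = d'"
proof -
  have c1: "[r + d = r' + d'] (mod N)" using e1 by (simp add: cong_def)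
  have c2: "[r + (N - d) = r' + (N - d')] (mod N)" using e2 by (simp add: cong_def)
  have cc: "[(r + d) + (r + (N - d)) = (r' + d') + (r' + (N - d'))] (mod N)"
    using cong_add[OF c1 c2] .
  have q1: "(r + d) + (r + (N - d)) = N + 2 * r" using d by simp
  have q2: "(r' + d') + (r' + (N - d')) = N + 2 * r'" using d by simp
  have "[N + 2 * r = N + 2 * r'] (mod N)" using cc unfolding q1 q2 .
  then have "[2 * r = 2 * r'] (mod N)" by (simp add: cong_add_lcancel_nat)
  moreover have "coprime 2 N" using oddN by simp
  ultimately have "[r = r'] (mod N)" using cong_mult_lcancel_nat by blast
  then have rr: "r = r'" using r cong_less_modulus_unique_nat by blast
  with e1 have "d = d'" using rr_inj[of d N d' r] d by simp
  with rr show "r = r' \<and> d = d'" by simp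
qed

lemma rr_phi_inj:
  fixes N :: nat
  assumes oddN: "odd N"
  shows "inj_on (\<lambda>(r,d). ((r + d) mod N, (r + (N - d)) mod N)) ({..<N} \<times> {1..<N})"
proof (rule inj_onI)
  fix p q assume "p \<in> {..<N} \<times> {1..<N}" "q \<in> {..<N} \<times> {1..<N}"
    and e: "(\<lambda>(r,d). ((r + d) mod N, (r + (N - d)) mod N)) p = (\<lambda>(r,d). ((r + d) mod N, (r + (N - d)) mod N)) q"
  then obtain r d r' d' where "p = (r,d)" "q = (r',d')" "r < N" "r' < N" "1 \<le> d" "d < N" "1 \<le> d'" "d' < N"
    by (cases p, cases q) auto
  with e rr_phi_inj0[OF oddN, of r r' d d'] show "p = q" by simp
qed


lemma rr_half:
  fixes f :: "nat \<Rightarrow> real" and m' :: nat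
  assumes sym: "\<And>d. 1 \<le> d \<Longrightarrow> d \<le> 2*m' \<Longrightarrow> f (2*m'+1 - d) = f d"
  shows "(\<Sum>d\<in>{1..<2*m'+1}. f d) = 2 * (\<Sum>k<m'. f (k+1))"
proof -
  have split: "{1..<2*m'+1} = {1..m'} \<union> {m'+1..<2*m'+1}" by auto
  have A: "(\<Sum>d\<in>{1..m'}. f d) = (\<Sum>k<m'. f (k+1))"
    by (rule sum.reindex_bij_witness[of _ "\<lambda>k. k+1" "\<lambda>d. d - 1"]) auto
  have B: "(\<Sum>d\<in>{m'+1..<2*m'+1}. f d) = (\<Sum>d\<in>{1..m'}. f d)"
  proof (rule sum.reindex_bij_witness[of _ "\<lambda>d. 2*m'+1 - d" "\<lambda>d. 2*m'+1 - d"])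
    fix a assume a: "a \<in> {m'+1..<2*m'+1}"
    have "f (2*m'+1 - (2*m'+1 - a)) = f (2*m'+1 - a)" by (rule sym) (use a in auto)
    moreover have "2*m'+1 - (2*m'+1 - a) = a" using a by auto
    ultimately show "f (2*m'+1 - a) = f a" by simp
  qed auto
  have "(\<Sum>d\<in>{1..<2*m'+1}. f d) = (\<Sum>d\<in>{1..m'}. f d) + (\<Sum>d\<in>{m'+1..<2*m'+1}. f d)"
    unfolding split by (rule sum.union_disjoint) auto
  then show ?thesis using A B by simp
qed

lemma rr_sum_odd:
  fixes g :: "nat \<Rightarrow> nat \<Rightarrow> real" and N :: nat
  assumes oddN: "odd N" and sym: "\<And>i j. g i j = g j i" and diag: "\<And>i. g i i = 0"
  shows "(\<Sum>i<N. \<Sum>j<N. g i j) = 2 * (\<Sum>r<N. \<Sum>k<(N - 1) div 2. g ((r + (k+1)) mod N) ((r + (N - (k+1))) mod N))"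
proof -
  define m' where "m' = (N - 1) div 2"
  have Nm: "N = 2*m'+1" using oddN unfolding m'_def by presburger
  define \<phi> where "\<phi> = (\<lambda>(r,d). ((r + d) mod N, (r + (N - d)) mod N))"
  define D where "D = Sigma {..<N} (\<lambda>i. {..<N} - {i})"
  define Dom where "Dom = {..<N} \<times> {1..<N}"
  have inj: "inj_on \<phi> Dom" unfolding \<phi>_def Dom_def by (rule rr_phi_inj[OF oddN])
  have sub: "\<phi> ` Dom \<subseteq> D"
  proof
    fix p assume "p \<in> \<phi> ` Dom"
    then obtain r d where p: "p = \<phi> (r,d)" and r: "r < N" and d: "1 \<le> d" "d < N"
      unfolding Dom_def by auto
    have ne: "d \<noteq> N - d" using oddN d by presburger
    have "(r + d) mod N \<noteq> (r + (N - d)) mod N"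
      using rr_inj[of d N "N - d" r] d ne by auto
    then show "p \<in> D" using p r unfolding \<phi>_def D_def by auto
  qed
  have cardD: "card D = N * (N - 1)"
    unfolding D_def by (simp add: card_SigmaI)
  have cardI: "card (\<phi> ` Dom) = N * (N - 1)"
    using card_image[OF inj] unfolding Dom_def by simp
  have img: "\<phi> ` Dom = D"
    by (rule card_subset_eq) (use sub cardD cardI in \<open>auto simp: D_def\<close>)
  have "(\<Sum>i<N. \<Sum>j<N. g i j) = (\<Sum>i<N. \<Sum>j\<in>{..<N} - {i}. g i j)"
  proof (rule sum.cong[OF refl])
    fix i assume i: "i \<in> {..<N}"
    show "(\<Sum>j<N. g i j) = (\<Sum>j\<in>{..<N} - {i}. g i j)"
      using sum_diff1[of "{..<N}" "g i" i] i diag by simp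
  qed
  also have "\<dots> = (\<Sum>p\<in>D. case_prod g p)"
    unfolding D_def by (rule sum.Sigma) auto
  also have "\<dots> = (\<Sum>p\<in>Dom. case_prod g (\<phi> p))"
    unfolding img[symmetric] by (rule sum.reindex[OF inj, unfolded comp_def])
  also have "\<dots> = (\<Sum>r<N. \<Sum>d\<in>{1..<N}. g ((r + d) mod N) ((r + (N - d)) mod N))"
    unfolding Dom_def \<phi>_def sum.cartesian_product by (intro sum.cong refl) auto
  also have "\<dots> = (\<Sum>r<N. 2 * (\<Sum>k<m'. g ((r + (k+1)) mod N) ((r + (N - (k+1))) mod N)))"
  proof (rule sum.cong[OF refl])
    fix r
    show "(\<Sum>d\<in>{1..<N}. g ((r + d) mod N) ((r + (N - d)) mod N)) =
          2 * (\<Sum>k<m'. g ((r + (k+1)) mod N) ((r + (N - (k+1))) mod N))"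
      unfolding Nm
      by (rule rr_half) (simp add: sym)
  qed
  finally show ?thesis by (simp add: sum_distrib_left m'_def)
qed

lemma rounds_exist:
  fixes n :: nat
  assumes n2: "n \<ge> 2"
  obtains N :: nat and a b :: "nat \<Rightarrow> nat \<Rightarrow> nat" where "N > 0"
    "\<And>r k. r < N \<Longrightarrow> k < n div 2 \<Longrightarrow> a r k < n \<and> b r k < n \<and> a r k \<noteq> b r k"
    "\<And>r k k'. r < N \<Longrightarrow> k < n div 2 \<Longrightarrow> k' < n div 2 \<Longrightarrow> k \<noteq> k' \<Longrightarrow>
        a r k \<noteq> a r k' \<and> a r k \<noteq> b r k' \<and> b r k \<noteq> b r k'"
    "\<And>g::nat\<Rightarrow>nat\<Rightarrow>real. (\<And>i j. g i j = g j i) \<Longrightarrow> (\<And>i. g i i = 0) \<Longrightarrow>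
        (\<Sum>i<n. \<Sum>j<n. g i j) = 2 * (\<Sum>r<N. \<Sum>k<n div 2. g (a r k) (b r k))"
    "2 * N * (n div 2) = n * (n - 1)"
proof (cases "odd n")
  case True
  define N where "N = n"
  define m' where "m' = (N - 1) div 2"
  have Nm: "N = 2*m'+1" using True unfolding m'_def N_def by presburger
  have md: "n div 2 = m'" using Nm N_def by simp
  have md2: "(n - Suc 0) div 2 = n div 2" using True by presburger
  define a where "a = (\<lambda>r k. (r + (k+1)) mod N)"
  define b where "b = (\<lambda>r k. (r + (N - (k+1))) mod N)"
  show ?thesis
  proof (rule that[of N a b])
    show "N > 0" using Nm by simp
    fix r k assume r: "r < N" and k: "k < n div 2"
    have "a r k \<noteq> b r k"
    proof
      assume "a r k = b r k"
      then have "(r + (k+1)) mod N = (r + (N - (k+1))) mod N" unfolding a_def b_def .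
      then have "k+1 = N - (k+1)" by (rule rr_inj[rotated 2]) (use k md Nm in auto)
      then show False using k md Nm by auto
    qed
    then show "a r k < n \<and> b r k < n \<and> a r k \<noteq> b r k"
      using Nm N_def unfolding a_def b_def by auto
  next
    fix r k k' assume r: "r < N" and k: "k < n div 2" and k': "k' < n div 2" and kk: "k \<noteq> k'"
    have km: "k < m'" "k' < m'" using k k' md by auto
    show "a r k \<noteq> a r k' \<and> a r k \<noteq> b r k' \<and> b r k \<noteq> b r k'"
      unfolding a_def b_def
      by (intro conjI rr_ne) (use km kk Nm in linarith)+
  next
    fix g :: "nat \<Rightarrow> nat \<Rightarrow> real"
    assume "\<And>i j. g i j = g j i" "\<And>i. g i i = 0"
    from rr_sum_odd[of N g, OF _ this] True show "(\<Sum>i<n. \<Sum>j<n. g i j) = 2 * (\<Sum>r<N. \<Sum>k<n div 2. g (a r k) (b r k))"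
      unfolding a_def b_def N_def using md2 by simp
  next
    show "2 * N * (n div 2) = n * (n - 1)" using Nm md N_def by simp
  qed
next
  case False
  define N where "N = n - 1"
  define m' where "m' = (N - 1) div 2"
  have Nm: "N = 2*m'+1" using False n2 unfolding m'_def N_def by presburger
  have md: "n div 2 = m' + 1" using Nm N_def n2 by simp
  have nN: "n = Suc N" using N_def n2 by simp
  define a where "a = (\<lambda>r k. if k < m' then (r + (k+1)) mod N else r)"
  define b where "b = (\<lambda>r k. if k < m' then (r + (N - (k+1))) mod N else N)"
  show ?thesis
  proof (rule that[of N a b])
    show "N > 0" using Nm by simp
    fix r k assume r: "r < N" and k: "k < n div 2"
    have "a r k \<noteq> b r k"
    proof (cases "k < m'")
      case True
      show ?thesis
      proof
        assume "a r k = b r k"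
        then have "(r + (k+1)) mod N = (r + (N - (k+1))) mod N" unfolding a_def b_def using True by simp
        then have "k+1 = N - (k+1)" by (rule rr_inj[rotated 2]) (use True Nm in auto)
        then show False using True Nm by auto
      qed
    next
      case False then show ?thesis using r unfolding a_def b_def by simp
    qed
    moreover have ltn: "x mod N < n" for x
    proof -
      have "x mod N < N" using Nm by simp
      then show ?thesis using nN by simp
    qed
    ultimately show "a r k < n \<and> b r k < n \<and> a r k \<noteq> b r k"
      using nN r unfolding a_def b_def by auto
  next
    fix r k k' assume r: "r < N" and k: "k < n div 2" and k': "k' < n div 2" and kk: "k \<noteq> k'"
    have rm: "r mod N = r" using r by simp
    have km: "k \<le> m'" "k' \<le> m'" using k k' md by auto
    have r0: "r = (r + 0) mod N" using rm by simp
    have lt: "(r + x) mod N < N" for x using Nm by simp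
    show "a r k \<noteq> a r k' \<and> a r k \<noteq> b r k' \<and> b r k \<noteq> b r k'"
    proof (cases "k < m'")
      case True
      note kt = this
      show ?thesis
      proof (cases "k' < m'")
        case True
        then show ?thesis using kt unfolding a_def b_def
          apply (simp only: kt True if_True)
          by (intro conjI rr_ne; use km kk Nm kt True in linarith)
      next
        case False
        have h1: "(r + (k+1)) mod N \<noteq> r"
          using rr_ne[of "k+1" N 0 r] rm kt Nm by simp
        have h2: "(r + (k+1)) mod N \<noteq> N" using lt[of "k+1"] by (metis less_irrefl)
        have h3: "(r + (N - (k+1))) mod N \<noteq> N" using lt[of "N - (k+1)"] by (metis less_irrefl)
        show ?thesis using kt False h1 h2 h3 unfolding a_def b_def by simp
      qed
    next
      case False
      then have kt': "k' < m'" using km kk by auto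
      have h1: "(r + (k'+1)) mod N \<noteq> r"
        using rr_ne[of "k'+1" N 0 r] rm kt' Nm by simp
      have h1': "(r + (N - (k'+1))) mod N \<noteq> r"
        using rr_ne[of "N - (k'+1)" N 0 r] rm kt' Nm by simp
      have h3: "N \<noteq> (r + (N - (k'+1))) mod N" using lt[of "N - (k'+1)"] by (metis less_irrefl)
      show ?thesis using kt' False not_sym[OF h1] not_sym[OF h1'] h3 unfolding a_def b_def by simp
    qed
  next
    fix g :: "nat \<Rightarrow> nat \<Rightarrow> real"
    assume sy: "\<And>i j. g i j = g j i" and dg: "\<And>i. g i i = 0"
    have odd: "(\<Sum>i<N. \<Sum>j<N. g i j) = 2 * (\<Sum>r<N. \<Sum>k<m'. g ((r + (k+1)) mod N) ((r + (N - (k+1))) mod N))"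
    proof -
      have oN: "odd N" using Nm by simp
      show ?thesis using rr_sum_odd[of N g, OF oN sy dg] unfolding m'_def .
    qed
    have "(\<Sum>i<n. \<Sum>j<n. g i j) = (\<Sum>i<N. \<Sum>j<N. g i j) + (\<Sum>i<N. g i N) + (\<Sum>j<N. g N j)"
      unfolding nN by (simp add: sum.distrib dg)
    also have "\<dots> = (\<Sum>i<N. \<Sum>j<N. g i j) + 2 * (\<Sum>r<N. g r N)"
    proof -
      have "(\<Sum>j<N. g N j) = (\<Sum>r<N. g r N)" by (intro sum.cong refl) (rule sy)
      then show ?thesis by (simp only: mult_2 add.assoc)
    qed
    also have "\<dots> = 2 * (\<Sum>r<N. \<Sum>k<m'. g ((r + (k+1)) mod N) ((r + (N - (k+1))) mod N)) + 2 * (\<Sum>r<N. g r N)"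
      using odd by simp
    also have "\<dots> = 2 * ((\<Sum>r<N. \<Sum>k<m'. g ((r + (k+1)) mod N) ((r + (N - (k+1))) mod N)) + (\<Sum>r<N. g r N))"
      by (simp only: distrib_left)
    also have "\<dots> = 2 * (\<Sum>r<N. (\<Sum>k<m'. g ((r + (k+1)) mod N) ((r + (N - (k+1))) mod N)) + g r N)"
      by (simp only: sum.distrib)
    also have "\<dots> = 2 * (\<Sum>r<N. \<Sum>k<n div 2. g (a r k) (b r k))"
    proof -
      have "(\<Sum>k<m'. g ((r + (k+1)) mod N) ((r + (N - (k+1))) mod N)) + g r N = (\<Sum>k<n div 2. g (a r k) (b r k))" for r
      proof -
        have e1: "(\<Sum>k<n div 2. g (a r k) (b r k)) = (\<Sum>k<m'. g (a r k) (b r k)) + g (a r m') (b r m')"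
          unfolding md by simp
        have e2: "(\<Sum>k<m'. g (a r k) (b r k)) = (\<Sum>k<m'. g ((r + (k+1)) mod N) ((r + (N - (k+1))) mod N))"
          by (intro sum.cong refl) (simp add: a_def b_def)
        have e3: "g (a r m') (b r m') = g r N" by (simp add: a_def b_def)
        show ?thesis unfolding e1 e2 e3 ..
      qed
      then show ?thesis by simp
    qed
    finally show "(\<Sum>i<n. \<Sum>j<n. g i j) = 2 * (\<Sum>r<N. \<Sum>k<n div 2. g (a r k) (b r k))" .
  next
    show "2 * N * (n div 2) = n * (n - 1)" using Nm md nN by simp
  qed
qed




definition hk :: "real \<Rightarrow> real \<Rightarrow> real" where "hk x y = (x - y)^2 / 2"

lemma hk_sym: "hk x y = hk y x" unfolding hk_def by (simp add: power2_commute)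
lemma hk_diag: "hk x x = 0" unfolding hk_def by simp
lemma hk_range: assumes "x \<in> {0..1}" "y \<in> {0..1}" shows "0 \<le> hk x y" "hk x y \<le> 1/2"
proof -
  show "0 \<le> hk x y" unfolding hk_def by simp
  have "\<bar>x - y\<bar> \<le> 1" using assms by auto
  then have "(x - y)^2 \<le> 1" by (metis abs_le_square_iff one_power2 abs_one) 
  then show "hk x y \<le> 1/2" unfolding hk_def by simp
qed

lemma exp_convex_bound:
  fixes t y :: real
  assumes "0 \<le> y" "y \<le> 1/2"
  shows "exp (t * y) \<le> 1 + 2 * y * (exp (t/2) - 1)"
proof -
  have "exp ((1 - 2*y) *\<^sub>R 0 + (2*y) *\<^sub>R (t/2)) \<le> (1 - 2*y) * exp 0 + (2*y) * exp (t/2)"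
    by (rule convex_onD[OF exp_convex]) (use assms in auto)
  moreover have "(1 - 2*y) *\<^sub>R 0 + (2*y) *\<^sub>R (t/2) = t * y" by simp
  ultimately show ?thesis by (simp add: algebra_simps)
qed

locale iid = prob_space M for M :: "'a measure" +
  fixes X :: "nat \<Rightarrow> 'a \<Rightarrow> real" and n :: nat and F :: "real measure"
  assumes meas[measurable]: "\<And>i. i < n \<Longrightarrow> X i \<in> borel_measurable M"
    and ind: "indep_vars (\<lambda>_. borel) X {..<n}"
    and law: "\<And>i. i < n \<Longrightarrow> distr M borel (X i) = F"
    and rng: "\<And>i w. i < n \<Longrightarrow> w \<in> space M \<Longrightarrow> X i w \<in> {0..1}"
begin

definition mu where "mu = (\<integral>x. x \<partial>F)"

lemma int_law: fixes f :: "real \<Rightarrow> real" assumes "i < n" "f \<in> borel_measurable borel"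
  shows "(\<integral>w. f (X i w) \<partial>M) = (\<integral>x. f x \<partial>F)"
  using integral_distr[of "X i" M borel f] assms law[of i] meas[of i] by simp

lemma bounded_integrable:
  fixes f :: "'a \<Rightarrow> real"
  assumes "f \<in> borel_measurable M" "\<And>w. w \<in> space M \<Longrightarrow> \<bar>f w\<bar> \<le> B"
  shows "integrable M f"
  by (rule integrable_const_bound[where B=B]) (use assms in auto)

lemma EX_mu: assumes "i < n" shows "expectation (X i) = mu"
  unfolding mu_def using int_law[of i "\<lambda>x. x"] assms by simp

lemma Evar: assumes "i < n" shows "expectation (\<lambda>w. (X i w - mu)^2) = law_variance F"
  unfolding law_variance_def mu_def[symmetric] using int_law[of i "\<lambda>x. (x - mu)^2"] assms by simp

lemma Ecross: assumes "a < n" "b < n" "a \<noteq> b"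
  shows "expectation (\<lambda>w. (X a w - mu) * (X b w - mu)) = 0"
proof -
  define Y where "Y = (\<lambda>i w. X i w - mu)"
  have indY: "indep_vars (\<lambda>_. borel) (\<lambda>i w. (\<lambda>x. x - mu) (X i w)) {a, b}"
    by (rule indep_vars_compose2[OF indep_vars_subset[OF ind]]) (use assms in auto)
  have intY: "integrable M (\<lambda>w. X i w - mu)" if "i \<in> {a,b}" for i
  proof (rule bounded_integrable[where B = "1 + \<bar>mu\<bar>"])
    have "i < n" using that assms by auto
    then show "(\<lambda>w. X i w - mu) \<in> borel_measurable M" by (intro borel_measurable_diff meas) auto
    fix w assume "w \<in> space M"
    then have "X i w \<in> {0..1}" using rng that assms by auto
    then show "\<bar>X i w - mu\<bar> \<le> 1 + \<bar>mu\<bar>" by auto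
  qed
  have "expectation (\<lambda>w. \<Prod>i\<in>{a,b}. X i w - mu) = (\<Prod>i\<in>{a,b}. expectation (\<lambda>w. X i w - mu))"
    by (rule indep_vars_lebesgue_integral) (use indY intY in auto)
  moreover have "expectation (\<lambda>w. X a w - mu) = 0"
  proof -
    have "integrable M (X a)"
    proof (rule bounded_integrable[where B = 1])
      show "X a \<in> borel_measurable M" using assms by simp
      fix w assume "w \<in> space M" then show "\<bar>X a w\<bar> \<le> 1" using rng[of a w] assms by auto
    qed
    then have "expectation (\<lambda>w. X a w - mu) = expectation (X a) - mu" by (simp add: prob_space)
    then show ?thesis using EX_mu[of a] assms by simp
  qed
  ultimately show ?thesis using assms by simp
qed

end



context iid begin

lemma int_bounded_fun:
  fixes f :: "'a \<Rightarrow> real"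
  assumes "f \<in> borel_measurable M" "\<And>w. w \<in> space M \<Longrightarrow> \<bar>f w\<bar> \<le> B"
  shows "integrable M f"
  using bounded_integrable assms by blast

lemma hk_X_range: assumes "a < n" "b < n" "w \<in> space M"
  shows "0 \<le> hk (X a w) (X b w)" "hk (X a w) (X b w) \<le> 1/2"
  using hk_range[OF rng[OF assms(1,3)] rng[OF assms(2,3)]] by auto

lemma hk_meas[measurable]: assumes "a < n" "b < n"
  shows "(\<lambda>w. hk (X a w) (X b w)) \<in> borel_measurable M"
  unfolding hk_def using assms by measurable

lemma Ehk: assumes "a < n" "b < n" "a \<noteq> b"
  shows "expectation (\<lambda>w. hk (X a w) (X b w)) = law_variance F"
proof -
  have ib: "integrable M (\<lambda>w. (X i w - mu)^2)" if "i < n" for i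
  proof (rule int_bounded_fun[where B = "(1 + \<bar>mu\<bar>)^2"])
    show "(\<lambda>w. (X i w - mu)^2) \<in> borel_measurable M" using that by measurable
    fix w assume "w \<in> space M"
    then have "X i w \<in> {0..1}" using rng that by auto
    then have "\<bar>X i w - mu\<bar> \<le> 1 + \<bar>mu\<bar>" by auto
    then have "\<bar>X i w - mu\<bar>^2 \<le> (1 + \<bar>mu\<bar>)^2" by (intro power_mono) auto
    then show "\<bar>(X i w - mu)^2\<bar> \<le> (1 + \<bar>mu\<bar>)^2" by simp
  qed
  have ic: "integrable M (\<lambda>w. (X a w - mu) * (X b w - mu))"
  proof (rule int_bounded_fun[where B = "(1 + \<bar>mu\<bar>)^2"])
    show "(\<lambda>w. (X a w - mu) * (X b w - mu)) \<in> borel_measurable M" using assms by measurable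
    fix w assume "w \<in> space M"
    then have "X a w \<in> {0..1}" "X b w \<in> {0..1}" using rng assms by auto
    then have "\<bar>X a w - mu\<bar> \<le> 1 + \<bar>mu\<bar>" "\<bar>X b w - mu\<bar> \<le> 1 + \<bar>mu\<bar>" by auto
    then show "\<bar>(X a w - mu) * (X b w - mu)\<bar> \<le> (1 + \<bar>mu\<bar>)^2"
      unfolding abs_mult power2_eq_square by (intro mult_mono) auto
  qed
  have eq: "hk (X a w) (X b w) = (X a w - mu)^2 / 2 + (X b w - mu)^2 / 2 - (X a w - mu) * (X b w - mu)" for w
    unfolding hk_def by (simp add: power2_eq_square field_simps)
  have "expectation (\<lambda>w. hk (X a w) (X b w)) =
     expectation (\<lambda>w. (X a w - mu)^2) / 2 + expectation (\<lambda>w. (X b w - mu)^2) / 2 - expectation (\<lambda>w. (X a w - mu) * (X b w - mu))"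
    unfolding eq using ib[OF assms(1)] ib[OF assms(2)] ic by simp
  then show ?thesis using Evar[OF assms(1)] Evar[OF assms(2)] Ecross[OF assms] by simp
qed

lemma mgf_pair: assumes "a < n" "b < n" "a \<noteq> b"
  shows "expectation (\<lambda>w. exp (t * hk (X a w) (X b w))) \<le> exp (2 * law_variance F * (exp (t/2) - 1))"
proof -
  have i1: "integrable M (\<lambda>w. exp (t * hk (X a w) (X b w)))"
  proof (rule int_bounded_fun[where B = "exp \<bar>t\<bar>"])
    show "(\<lambda>w. exp (t * hk (X a w) (X b w))) \<in> borel_measurable M" using assms by measurable
    fix w assume w: "w \<in> space M"
    have "t * hk (X a w) (X b w) \<le> \<bar>t\<bar>"
    proof -
      have "t * hk (X a w) (X b w) \<le> \<bar>t\<bar> * hk (X a w) (X b w)"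
        using hk_X_range[OF assms(1,2) w] by (intro mult_right_mono) auto
      also have "\<dots> \<le> \<bar>t\<bar> * 1" using hk_X_range[OF assms(1,2) w] by (intro mult_left_mono) auto
      finally show ?thesis by simp
    qed
    then show "\<bar>exp (t * hk (X a w) (X b w))\<bar> \<le> exp \<bar>t\<bar>" by simp
  qed
  have i2: "integrable M (\<lambda>w. 1 + 2 * hk (X a w) (X b w) * (exp (t/2) - 1))"
  proof (rule int_bounded_fun[where B = "1 + \<bar>exp (t/2) - 1\<bar>"])
    show "(\<lambda>w. 1 + 2 * hk (X a w) (X b w) * (exp (t/2) - 1)) \<in> borel_measurable M" using assms by measurable
    fix w assume w: "w \<in> space M"
    have "\<bar>2 * hk (X a w) (X b w) * (exp (t/2) - 1)\<bar> \<le> 1 * \<bar>exp (t/2) - 1\<bar>"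
      unfolding abs_mult using hk_X_range[OF assms(1,2) w] by (intro mult_right_mono) auto
    then show "\<bar>1 + 2 * hk (X a w) (X b w) * (exp (t/2) - 1)\<bar> \<le> 1 + \<bar>exp (t/2) - 1\<bar>" by simp
  qed
  have "expectation (\<lambda>w. exp (t * hk (X a w) (X b w))) \<le> expectation (\<lambda>w. 1 + 2 * hk (X a w) (X b w) * (exp (t/2) - 1))"
    by (rule integral_mono[OF i1 i2]) (use exp_convex_bound hk_X_range[OF assms(1,2)] in auto)
  also have "\<dots> = 1 + 2 * law_variance F * (exp (t/2) - 1)"
  proof -
    have ih: "integrable M (\<lambda>w. hk (X a w) (X b w))"
    proof (rule int_bounded_fun[where B = 1])
      show "(\<lambda>w. hk (X a w) (X b w)) \<in> borel_measurable M" using assms by simp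
      fix w assume w: "w \<in> space M"
      show "\<bar>hk (X a w) (X b w)\<bar> \<le> 1" using hk_X_range[OF assms(1,2) w] by linarith
    qed
    then show ?thesis using Ehk[OF assms] by (simp add: prob_space)
  qed
  also have "\<dots> \<le> exp (2 * law_variance F * (exp (t/2) - 1))" by simp
  finally show ?thesis .
qed

lemma mgf_round:
  fixes a b :: "nat \<Rightarrow> nat" and m :: nat and t :: real
  assumes m: "m > 0"
    and ab: "\<And>k. k < m \<Longrightarrow> a k < n \<and> b k < n \<and> a k \<noteq> b k"
    and dis: "\<And>k k'. k < m \<Longrightarrow> k' < m \<Longrightarrow> k \<noteq> k' \<Longrightarrow> a k \<noteq> a k' \<and> a k \<noteq> b k' \<and> b k \<noteq> b k'"
  shows "expectation (\<lambda>w. exp (t * ((1 / real m) * (\<Sum>k<m. hk (X (a k) w) (X (b k) w)))))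
         \<le> exp (2 * real m * law_variance F * (exp (t / (2 * real m)) - 1))"
proof -
  define K where "K k = {a k, b k}" for k
  define s where "s = t / real m"
  have disj: "disjoint_family_on K {..<m}"
    unfolding disjoint_family_on_def K_def
  proof (intro ballI impI)
    fix k k' assume "k \<in> {..<m}" "k' \<in> {..<m}" "k \<noteq> k'"
    then show "{a k, b k} \<inter> {a k', b k'} = {}" using dis[of k k'] dis[of k' k] by auto
  qed
  have ind1: "indep_vars (\<lambda>k. PiM (K k) (\<lambda>_. borel)) (\<lambda>k \<omega>. restrict (\<lambda>i. X i \<omega>) (K k)) {..<m}"
    by (rule indep_vars_restrict[OF ind _ disj]) (use ab in \<open>auto simp: K_def\<close>)
  define Y where "Y k f = exp (s * hk (f (a k)) (f (b k)))" for k and f :: "nat \<Rightarrow> real"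
  have Ymeas: "Y k \<in> borel_measurable (PiM (K k) (\<lambda>_. borel))" for k
  proof -
    have ma: "(\<lambda>f. f (a k)) \<in> borel_measurable (PiM (K k) (\<lambda>_. borel))"
      by (rule measurable_component_singleton) (simp add: K_def)
    have mb: "(\<lambda>f. f (b k)) \<in> borel_measurable (PiM (K k) (\<lambda>_. borel))"
      by (rule measurable_component_singleton) (simp add: K_def)
    note ma[measurable] mb[measurable]
    show ?thesis unfolding Y_def hk_def by measurable
  qed
  have ind2: "indep_vars (\<lambda>_. borel) (\<lambda>k \<omega>. Y k (restrict (\<lambda>i. X i \<omega>) (K k))) {..<m}"
    by (rule indep_vars_compose2[OF ind1 Ymeas])
  define Z where "Z k \<omega> = exp (s * hk (X (a k) \<omega>) (X (b k) \<omega>))" for k \<omega>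
  have "(\<lambda>k \<omega>. Y k (restrict (\<lambda>i. X i \<omega>) (K k))) = Z"
    by (intro ext) (simp add: Y_def Z_def K_def)
  with ind2 have ind3: "indep_vars (\<lambda>_. borel) Z {..<m}" by simp
  have Zint: "integrable M (Z k)" if "k < m" for k
  proof (rule int_bounded_fun[where B = "exp \<bar>s\<bar>"])
    have "a k < n" "b k < n" using ab[OF that] by auto
    note hm[measurable] = hk_meas[OF this]
    show "Z k \<in> borel_measurable M" unfolding Z_def by measurable
    fix w assume w: "w \<in> space M"
    note hr = hk_X_range[of "a k" "b k" w]
    have "s * hk (X (a k) w) (X (b k) w) \<le> \<bar>s\<bar> * hk (X (a k) w) (X (b k) w)"
      using hr ab[OF that] w by (intro mult_right_mono) auto
    also have "\<dots> \<le> \<bar>s\<bar> * 1" using hr ab[OF that] w by (intro mult_left_mono) auto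
    finally show "\<bar>Z k w\<bar> \<le> exp \<bar>s\<bar>" unfolding Z_def by simp
  qed
  have pw: "exp (t * ((1 / real m) * (\<Sum>k<m. hk (X (a k) w) (X (b k) w)))) = (\<Prod>k<m. Z k w)" for w
  proof -
    have "t * ((1 / real m) * (\<Sum>k<m. hk (X (a k) w) (X (b k) w))) = (\<Sum>k<m. s * hk (X (a k) w) (X (b k) w))"
      unfolding s_def by (simp add: sum_distrib_left)
    then show ?thesis unfolding Z_def by (simp add: exp_sum)
  qed
  have "expectation (\<lambda>w. exp (t * ((1 / real m) * (\<Sum>k<m. hk (X (a k) w) (X (b k) w)))))
      = expectation (\<lambda>w. \<Prod>k<m. Z k w)" unfolding pw ..
  also have "\<dots> = (\<Prod>k<m. expectation (Z k))"
    by (rule indep_vars_lebesgue_integral) (use ind3 Zint in auto)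
  also have "\<dots> \<le> (\<Prod>k<m. exp (2 * law_variance F * (exp (s/2) - 1)))"
  proof (rule prod_mono)
    fix k assume k: "k \<in> {..<m}"
    have "0 \<le> expectation (Z k)" unfolding Z_def by simp
    moreover have "expectation (Z k) \<le> exp (2 * law_variance F * (exp (s/2) - 1))"
      unfolding Z_def by (rule mgf_pair) (use ab k in auto)
    ultimately show "0 \<le> expectation (Z k) \<and> expectation (Z k) \<le> exp (2 * law_variance F * (exp (s/2) - 1))" by simp
  qed
  also have "\<dots> = exp (2 * real m * law_variance F * (exp (t / (2 * real m)) - 1))"
  proof -
    have "s / 2 = t / (2 * real m)" unfolding s_def by simp
    then show ?thesis by (simp add: exp_of_nat_mult[symmetric] mult.assoc)
  qed
  finally show ?thesis .
qed

end



lemma alg_identity: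
  fixes x :: "nat \<Rightarrow> real" and n :: nat
  assumes "n > 0"
  shows "(\<Sum>i<n. \<Sum>j<n. hk (x i) (x j)) = real n * (\<Sum>i<n. (x i - (\<Sum>j<n. x j) / real n)^2)"
proof -
  define A where "A = (\<Sum>i<n. (x i)^2)"
  define B where "B = (\<Sum>i<n. x i)"
  have "(\<Sum>i<n. \<Sum>j<n. hk (x i) (x j)) = (\<Sum>i<n. \<Sum>j<n. (x i)^2/2 + (x j)^2/2 - x i * x j)"
    unfolding hk_def by (intro sum.cong refl) (simp add: power2_diff field_simps)
  also have "\<dots> = (\<Sum>i<n. real n * (x i)^2/2 + A/2 - x i * B)"
    unfolding A_def B_def by (intro sum.cong refl) (simp add: sum.distrib sum_subtractf sum_divide_distrib sum_distrib_left)
  also have "\<dots> = (\<Sum>i<n. real n * (x i)^2/2) + (\<Sum>i<n. A/2) - (\<Sum>i<n. x i * B)"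
    by (simp only: sum.distrib sum_subtractf)
  also have "\<dots> = real n * A - B^2"
  proof -
    have h1: "(\<Sum>i<n. real n * (x i)^2/2) = real n * A / 2"
      unfolding A_def by (simp add: sum_divide_distrib[symmetric] sum_distrib_left[symmetric])
    have h2: "(\<Sum>i<n. A/2) = real n * A / 2" by simp
    have h3: "(\<Sum>i<n. x i * B) = B^2"
      unfolding power2_eq_square by (simp only: B_def sum_distrib_right[symmetric])
    show ?thesis unfolding h1 h2 h3 by simp
  qed
  finally have L: "(\<Sum>i<n. \<Sum>j<n. hk (x i) (x j)) = real n * A - B^2" .
  have "(\<Sum>i<n. (x i - B / real n)^2) = (\<Sum>i<n. (x i)^2 - 2 * (B / real n) * x i + (B / real n)^2)"
    by (intro sum.cong refl) (simp add: power2_diff)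
  also have "\<dots> = A - 2 * (B / real n) * B + real n * (B / real n)^2"
    unfolding A_def B_def by (simp add: sum.distrib sum_subtractf sum_distrib_left)
  also have "\<dots> = A - B^2 / real n"
    using assms by (simp add: power2_eq_square field_simps)
  finally have R: "(\<Sum>i<n. (x i - B / real n)^2) = A - B^2 / real n" .
  show ?thesis unfolding L B_def[symmetric] R using assms by (simp add: field_simps)
qed

context iid begin

lemma S_decomp:
  fixes N :: nat and a b :: "nat \<Rightarrow> nat \<Rightarrow> nat"
  assumes n2: "n \<ge> 2" and N: "N > 0"
    and sumid: "\<And>g::nat\<Rightarrow>nat\<Rightarrow>real. (\<And>i j. g i j = g j i) \<Longrightarrow> (\<And>i. g i i = 0) \<Longrightarrow>
        (\<Sum>i<n. \<Sum>j<n. g i j) = 2 * (\<Sum>r<N. \<Sum>k<n div 2. g (a r k) (b r k))"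
    and cnt: "2 * N * (n div 2) = n * (n - 1)"
  shows "sample_var n X w = (1 / real N) * (\<Sum>r<N. (1 / real (n div 2)) * (\<Sum>k<n div 2. hk (X (a r k) w) (X (b r k) w)))"
proof -
  define m where "m = n div 2"
  define T where "T = (\<Sum>r<N. \<Sum>k<m. hk (X (a r k) w) (X (b r k) w))"
  have m0: "m > 0" using n2 unfolding m_def by simp
  have cntr: "2 * real N * real m = real n * (real n - 1)"
  proof -
    have "real (2 * N * m) = real (n * (n - 1))" using cnt unfolding m_def by simp
    then show ?thesis using n2 by (simp add: of_nat_diff)
  qed
  have "(\<Sum>i<n. \<Sum>j<n. hk (X i w) (X j w)) = 2 * T"
    unfolding T_def m_def by (rule sumid) (simp_all add: hk_sym hk_diag)
  moreover have "(\<Sum>i<n. \<Sum>j<n. hk (X i w) (X j w)) = real n * (\<Sum>i<n. (X i w - (\<Sum>j<n. X j w) / real n)^2)"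
    using alg_identity[of n "\<lambda>i. X i w"] n2 by simp
  moreover have "sample_var n X w = (\<Sum>i<n. (X i w - (\<Sum>j<n. X j w) / real n)^2) / (real n - 1)"
    unfolding sample_var_def sample_mean_def ..
  ultimately have "sample_var n X w = 2 * T / (real n * (real n - 1))"
    using n2 by (simp add: field_simps)
  also have "\<dots> = T / (real N * real m)" unfolding cntr[symmetric] using N m0 by simp
  also have "\<dots> = (1 / real N) * (\<Sum>r<N. (1 / real m) * (\<Sum>k<m. hk (X (a r k) w) (X (b r k) w)))"
    unfolding T_def by (simp add: sum_distrib_left sum_divide_distrib)
  finally show ?thesis unfolding m_def .
qed

lemma S_meas[measurable]: "(\<lambda>w. sample_var n X w) \<in> borel_measurable M"
  unfolding sample_var_def sample_mean_def by measurable

lemma mgf_S: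
  fixes t :: real
  assumes n2: "n \<ge> 2"
  shows "expectation (\<lambda>w. exp (t * sample_var n X w))
         \<le> exp (2 * real (n div 2) * law_variance F * (exp (t / (2 * real (n div 2))) - 1))"
proof -
  define m where "m = n div 2"
  have m0: "m > 0" using n2 unfolding m_def by simp
  show ?thesis
  proof (rule rounds_exist[OF n2])
  fix N a b assume N: "N > 0"
    and ab: "\<And>r k. r < N \<Longrightarrow> k < n div 2 \<Longrightarrow> a r k < n \<and> b r k < n \<and> a r k \<noteq> b r k"
    and dis: "\<And>r k k'. r < N \<Longrightarrow> k < n div 2 \<Longrightarrow> k' < n div 2 \<Longrightarrow> k \<noteq> k' \<Longrightarrow>
        a r k \<noteq> a r k' \<and> a r k \<noteq> b r k' \<and> b r k \<noteq> b r k'"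
    and sumid: "\<And>g::nat\<Rightarrow>nat\<Rightarrow>real. (\<And>i j. g i j = g j i) \<Longrightarrow> (\<And>i. g i i = 0) \<Longrightarrow>
        (\<Sum>i<n. \<Sum>j<n. g i j) = 2 * (\<Sum>r<N. \<Sum>k<n div 2. g (a r k) (b r k))"
    and cnt: "2 * N * (n div 2) = n * (n - 1)"

  define W where "W r w = (1 / real m) * (\<Sum>k<m. hk (X (a r k) w) (X (b r k) w))" for r w
  define B where "B = exp (2 * real m * law_variance F * (exp (t / (2 * real m)) - 1))"
  have Sdec: "sample_var n X w = (1 / real N) * (\<Sum>r<N. W r w)" for w
    unfolding W_def m_def by (rule S_decomp[OF n2 N sumid cnt])
  have Wmeas[measurable]: "W r \<in> borel_measurable M" if "r < N" for r
  proof -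
    have "(\<lambda>w. hk (X (a r k) w) (X (b r k) w)) \<in> borel_measurable M" if "k \<in> {..<m}" for k
      using ab[of r k] \<open>r < N\<close> that unfolding m_def by auto
    then show ?thesis unfolding W_def by (intro borel_measurable_times borel_measurable_const borel_measurable_sum) auto
  qed
  have Wrange: "0 \<le> W r w \<and> W r w \<le> 1/2" if "r < N" "w \<in> space M" for r w
  proof -
    have hr: "0 \<le> hk (X (a r k) w) (X (b r k) w) \<and> hk (X (a r k) w) (X (b r k) w) \<le> 1/2" if "k < m" for k
      using hk_X_range[of "a r k" "b r k" w] ab[of r k] \<open>r < N\<close> \<open>w \<in> space M\<close> that unfolding m_def by auto
    have "(\<Sum>k<m. hk (X (a r k) w) (X (b r k) w)) \<le> (\<Sum>k<m. 1/2)" by (rule sum_mono) (use hr in auto)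
    moreover have "0 \<le> (\<Sum>k<m. hk (X (a r k) w) (X (b r k) w))" by (rule sum_nonneg) (use hr in auto)
    ultimately show ?thesis unfolding W_def using m0 by (auto simp: field_simps)
  qed
  have expW_int: "integrable M (\<lambda>w. exp (t * W r w))" if "r < N" for r
  proof (rule int_bounded_fun[where B = "exp \<bar>t\<bar>"])
    show "(\<lambda>w. exp (t * W r w)) \<in> borel_measurable M" using that by measurable
    fix w assume w: "w \<in> space M"
    have "t * W r w \<le> \<bar>t\<bar> * W r w" using Wrange[OF that w] by (intro mult_right_mono) auto
    also have "\<dots> \<le> \<bar>t\<bar> * 1" using Wrange[OF that w] by (intro mult_left_mono) auto
    finally show "\<bar>exp (t * W r w)\<bar> \<le> exp \<bar>t\<bar>" by simp
  qed
  have Srange: "0 \<le> sample_var n X w \<and> sample_var n X w \<le> 1/2" if "w \<in> space M" for w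
  proof -
    have "(\<Sum>r<N. W r w) \<le> (\<Sum>r<N. 1/2)" by (rule sum_mono) (use Wrange that in auto)
    moreover have "0 \<le> (\<Sum>r<N. W r w)" by (rule sum_nonneg) (use Wrange that in auto)
    ultimately show ?thesis unfolding Sdec using N by (auto simp: field_simps)
  qed
  have expS_int: "integrable M (\<lambda>w. exp (t * sample_var n X w))"
  proof (rule int_bounded_fun[where B = "exp \<bar>t\<bar>"])
    show "(\<lambda>w. exp (t * sample_var n X w)) \<in> borel_measurable M" by measurable
    fix w assume w: "w \<in> space M"
    have "t * sample_var n X w \<le> \<bar>t\<bar> * sample_var n X w" using Srange[OF w] by (intro mult_right_mono) auto
    also have "\<dots> \<le> \<bar>t\<bar> * 1" using Srange[OF w] by (intro mult_left_mono) auto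
    finally show "\<bar>exp (t * sample_var n X w)\<bar> \<le> exp \<bar>t\<bar>" by simp
  qed
  have jensen: "exp (t * sample_var n X w) \<le> (\<Sum>r<N. (1 / real N) * exp (t * W r w))" for w
  proof -
    have "t * sample_var n X w = (\<Sum>r<N. (1 / real N) *\<^sub>R (t * W r w))"
      unfolding Sdec by (simp add: sum_distrib_left)
    moreover have "exp (\<Sum>r<N. (1 / real N) *\<^sub>R (t * W r w)) \<le> (\<Sum>r<N. (1 / real N) * exp (t * W r w))"
      by (rule convex_on_sum[OF _ _ exp_convex]) (use N in auto)
    ultimately show ?thesis by simp
  qed
  have "expectation (\<lambda>w. exp (t * sample_var n X w)) \<le> expectation (\<lambda>w. \<Sum>r<N. (1 / real N) * exp (t * W r w))"
    by (rule integral_mono[OF expS_int]) (use expW_int jensen in auto)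
  also have "\<dots> = (\<Sum>r<N. (1 / real N) * expectation (\<lambda>w. exp (t * W r w)))"
  proof -
    have "expectation (\<lambda>w. \<Sum>r<N. (1 / real N) * exp (t * W r w)) = (\<Sum>r<N. expectation (\<lambda>w. (1 / real N) * exp (t * W r w)))"
      by (rule Bochner_Integration.integral_sum[where f = "\<lambda>r w. (1 / real N) * exp (t * W r w)"]) (use expW_int in auto)
    then show ?thesis by simp
  qed
  also have "\<dots> \<le> (\<Sum>r<N. (1 / real N) * B)"
  proof (rule sum_mono)
    fix r assume r: "r \<in> {..<N}"
    have "expectation (\<lambda>w. exp (t * W r w)) \<le> B"
      unfolding W_def B_def
    proof (rule mgf_round[OF m0])
      show "\<And>k. k < m \<Longrightarrow> a r k < n \<and> b r k < n \<and> a r k \<noteq> b r k" using ab r unfolding m_def by auto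
      show "\<And>k k'. k < m \<Longrightarrow> k' < m \<Longrightarrow> k \<noteq> k' \<Longrightarrow> a r k \<noteq> a r k' \<and> a r k \<noteq> b r k' \<and> b r k \<noteq> b r k'"
        using dis r unfolding m_def by auto
    qed
    then show "(1 / real N) * expectation (\<lambda>w. exp (t * W r w)) \<le> (1 / real N) * B"
      by (intro mult_left_mono) auto
  qed
  also have "\<dots> = B" using N by simp
  finally show ?thesis unfolding B_def m_def .
  qed
qed

end




lemma exp_upper_small:
  fixes u :: real assumes "0 \<le> u" "u \<le> 1/2"
  shows "exp u \<le> 1 + u + 2 * u^2"
proof -
  have "1 - u \<le> exp (-u)" using exp_ge_add_one_self[of "-u"] by simp
  then have "exp u * (1 - u) \<le> exp u * exp (-u)" by (intro mult_left_mono) auto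
  then have e: "exp u * (1 - u) \<le> 1" by (simp add: exp_minus)
  have "1 \<le> (1 - u) * (1 + u + 2 * u^2)"
  proof -
    have "(1 - u) * (1 + u + 2 * u^2) = 1 + u^2 * (1 - 2*u)" by (simp add: power2_eq_square algebra_simps)
    moreover have "0 \<le> u^2 * (1 - 2*u)" using assms by simp
    ultimately show ?thesis by simp
  qed
  with e have "exp u * (1 - u) \<le> (1 + u + 2 * u^2) * (1 - u)" by (simp add: mult.commute)
  moreover have "1 - u > 0" using assms by simp
  ultimately show ?thesis by simp
qed

lemma exp_neg_upper:
  fixes u :: real assumes "0 \<le> u"
  shows "exp (-u) \<le> 1 - u + u^2 / 2"
proof -
  have q: "1 + u + u^2/2 \<le> exp u" by (rule exp_lower_Taylor_quadratic) (use assms in simp)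
  have pos: "0 < 1 + u + u^2/2" using assms by (simp add: add_pos_nonneg)
  have "exp (-u) = 1 / exp u" by (simp add: exp_minus field_simps)
  also have "\<dots> \<le> 1 / (1 + u + u^2/2)" by (rule divide_left_mono) (use q pos in auto)
  also have "\<dots> \<le> 1 - u + u^2 / 2"
  proof -
    have "(1 + u + u^2/2) * (1 - u + u^2/2) = 1 + u^4/4"
      by (simp add: power2_eq_square power4_eq_xxxx algebra_simps)
    then have "1 \<le> (1 + u + u^2/2) * (1 - u + u^2/2)" by simp
    then show ?thesis using pos by (simp add: divide_le_eq mult.commute)
  qed
  finally show ?thesis .
qed

context iid begin

lemma V_nonneg: "0 \<le> law_variance F"
  unfolding law_variance_def by simp

lemma set_int_space: "integrable M f \<Longrightarrow> set_integrable M (space M) f"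
  unfolding set_integrable_def
  by (subst Bochner_Integration.integrable_cong[OF refl, where g = f]) (auto simp: indicator_def)

lemma S_range: assumes n2: "n \<ge> 2" and w: "w \<in> space M" shows "0 \<le> sample_var n X w"
proof -
  have "0 \<le> (\<Sum>i<n. (X i w - sample_mean n X w)\<^sup>2)" by (simp add: sum_nonneg)
  moreover have "0 < real n - 1" using n2 by simp
  ultimately show ?thesis unfolding sample_var_def by simp
qed

lemma S_upper: assumes n2: "n \<ge> 2" and w: "w \<in> space M" shows "sample_var n X w \<le> 2"
proof -
  have xr: "0 \<le> X i w \<and> X i w \<le> 1" if "i < n" for i using rng[OF that w] by auto
  have "(\<Sum>i<n. X i w) \<le> (\<Sum>i<n. 1)" by (rule sum_mono) (use xr in auto)
  moreover have "0 \<le> (\<Sum>i<n. X i w)" by (rule sum_nonneg) (use xr in auto)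
  ultimately have mr: "0 \<le> sample_mean n X w" "sample_mean n X w \<le> 1"
    unfolding sample_mean_def using n2 by (auto simp: divide_le_eq)
  have "(X i w - sample_mean n X w)\<^sup>2 \<le> 1" if "i < n" for i
  proof -
    have "\<bar>X i w - sample_mean n X w\<bar> \<le> 1" using xr[OF that] mr by auto
    then have "\<bar>X i w - sample_mean n X w\<bar>^2 \<le> 1^2" by (intro power_mono) auto
    then show ?thesis by simp
  qed
  then have "(\<Sum>i<n. (X i w - sample_mean n X w)\<^sup>2) \<le> (\<Sum>i<n. 1)" by (intro sum_mono) auto
  then have s1: "(\<Sum>i<n. (X i w - sample_mean n X w)\<^sup>2) \<le> real n" by simp
  have "real n \<le> 2 * (real n - 1)" using n2 by simp
  with s1 have "(\<Sum>i<n. (X i w - sample_mean n X w)\<^sup>2) \<le> 2 * (real n - 1)" by linarith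
  moreover have "0 < real n - 1" using n2 by simp
  ultimately show ?thesis unfolding sample_var_def by (simp add: divide_le_eq)
qed

lemma expS_integrable: assumes n2: "n \<ge> 2" shows "integrable M (\<lambda>w. exp (t * sample_var n X w))"
proof (rule int_bounded_fun[where B = "exp (2 * \<bar>t\<bar>)"])
  show "(\<lambda>w. exp (t * sample_var n X w)) \<in> borel_measurable M" by measurable
  fix w assume w: "w \<in> space M"
  have "t * sample_var n X w \<le> \<bar>t\<bar> * sample_var n X w" using S_range[OF n2 w] by (intro mult_right_mono) auto
  also have "\<dots> \<le> \<bar>t\<bar> * 2" using S_upper[OF n2 w] by (intro mult_left_mono) auto
  finally show "\<bar>exp (t * sample_var n X w)\<bar> \<le> exp (2 * \<bar>t\<bar>)" by (simp add: mult.commute)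
qed

end



lemma key1: fixes s e D :: real assumes "D = s + e" "D > 0"
  shows "-2 * (e/(2 * D)) * (2 * s * e + e^2) + 4 * s^2 * (e/(2 * D))^2 + e^2 = - (s * e^3) / D^2"
proof -
  have "(-2 * (e/(2 * D)) * (2 * s * e + e^2) + 4 * s^2 * (e/(2 * D))^2 + e^2) * D^2 = - (s * e^3)"
    using assms(2) by (simp add: power2_eq_square field_simps) (simp add: assms(1) algebra_simps power3_eq_cube)
  then show ?thesis using assms(2) by (simp add: field_simps)
qed
lemma key2: fixes s e :: real assumes "e < s" "0 < e"
  shows "2 * (e/s) * (s-e)^2 - 2 * s^2 * (e/s) + s^2 * (e/s)^2 = -3 * e^2 + 2 * e^3/s"
proof -
  have s0: "s > 0" using assms by simp
  have "(2 * (e/s) * (s-e)^2 - 2 * s^2 * (e/s) + s^2 * (e/s)^2) * s = (-3 * e^2 + 2 * e^3/s) * s"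
    using s0 by (simp add: power2_eq_square power3_eq_cube field_simps)
  then show ?thesis using s0 by simp
qed
lemma key3: fixes s e :: real assumes "e < s" "0 < e" shows "e^3 / s \<le> e^2"
proof -
  have s0: "s > 0" using assms by simp
  have "e^3 = e^2 * e" by (simp add: power3_eq_cube power2_eq_square)
  also have "\<dots> \<le> e^2 * s" using assms by (intro mult_left_mono) auto
  finally show ?thesis using s0 by (simp add: divide_le_eq)
qed

context iid begin

lemma upper_tail:
  assumes n2: "n \<ge> 2" and d0: "0 < \<delta>" and d1: "\<delta> < 1"
  shows "prob {w \<in> space M. sqrt (law_variance F) + sqrt (ln (1/\<delta>) / real (n div 2)) < sqrt (sample_var n X w)} \<le> \<delta>"
proof -
  define m where "m = real (n div 2)"
  define L where "L = ln (1/\<delta>)"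
  define e where "e = sqrt (L / m)"
  define s where "s = sqrt (law_variance F)"
  define D where "D = s + e"
  define T where "T = D^2"
  define u where "u = e / (2 * D)"
  define lam where "lam = 2 * m * u"
  have m1: "m \<ge> 1" using n2 unfolding m_def by simp
  have L0: "L > 0" unfolding L_def using d0 d1 by simp
  have e0: "e > 0" unfolding e_def using L0 m1 by simp
  have e2: "e^2 = L / m" unfolding e_def using L0 m1 by simp
  have s0: "s \<ge> 0" unfolding s_def using V_nonneg by simp
  have V: "law_variance F = s^2" unfolding s_def by (rule real_sqrt_pow2[OF V_nonneg, symmetric])
  have D0: "D > 0" unfolding D_def using s0 e0 by simp
  have u0: "0 \<le> u" "u \<le> 1/2" unfolding u_def D_def using s0 e0 by (auto simp: field_simps)
  have lam0: "lam > 0" unfolding lam_def u_def using m1 e0 D0 by simp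
  have sub: "{w \<in> space M. s + e < sqrt (sample_var n X w)} \<subseteq> {w \<in> space M. T \<le> sample_var n X w}"
  proof safe
    fix w assume w: "w \<in> space M" and lt: "s + e < sqrt (sample_var n X w)"
    have "D^2 \<le> (sqrt (sample_var n X w))^2" using lt D0 unfolding D_def by (intro power_mono) auto
    then show "T \<le> sample_var n X w" unfolding T_def using S_range[OF n2 w] by simp
  qed
  have "prob {w \<in> space M. s + e < sqrt (sample_var n X w)} \<le> prob {w \<in> space M. T \<le> sample_var n X w}"
    by (rule finite_measure_mono[OF sub]) measurable
  also have "\<dots> \<le> exp (- lam * T) * (\<integral>w\<in>space M. exp (lam * sample_var n X w) \<partial>M)"
    by (rule Chernoff_ineq_ge[OF lam0 set_int_space[OF expS_integrable[OF n2]]]) simp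
  also have "\<dots> = exp (- lam * T) * expectation (\<lambda>w. exp (lam * sample_var n X w))"
    using set_integral_space[OF expS_integrable[OF n2]] by simp
  also have "\<dots> \<le> exp (- lam * T) * exp (2 * m * law_variance F * (exp (lam / (2 * m)) - 1))"
    by (rule mult_left_mono) (use mgf_S[OF n2, of lam] in \<open>auto simp: m_def\<close>)
  also have "\<dots> = exp (- lam * T + 2 * m * s^2 * (exp u - 1))"
  proof -
    have "lam / (2 * m) = u" unfolding lam_def using m1 by simp
    then show ?thesis by (simp add: V mult_exp_exp)
  qed
  also have "\<dots> \<le> exp (- L)"
  proof -
    have "exp u - 1 \<le> u + 2 * u^2" using exp_upper_small[OF u0] by simp
    then have "2 * m * s^2 * (exp u - 1) \<le> 2 * m * s^2 * (u + 2 * u^2)"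
      using m1 by (intro mult_left_mono) auto
    moreover have key: "- 2 * u * (2 * s * e + e^2) + 4 * s^2 * u^2 + e^2 = - (s * e^3) / D^2"
      unfolding u_def by (rule key1[OF D_def D0])
    moreover have "- (s * e^3) / D^2 \<le> 0" using s0 e0 D0 by simp
    moreover have "T = s^2 + 2 * s * e + e^2" unfolding T_def D_def by (simp add: power2_eq_square algebra_simps)
    moreover have "L = m * e^2" using e2 m1 by simp
    ultimately have "- lam * T + 2 * m * s^2 * (exp u - 1) \<le> - L"
      unfolding lam_def
    proof -
      assume a1: "2 * m * s^2 * (exp u - 1) \<le> 2 * m * s^2 * (u + 2 * u^2)"
        and a2: "- 2 * u * (2 * s * e + e^2) + 4 * s^2 * u^2 + e^2 = - (s * e^3) / D^2"
        and a3: "- (s * e^3) / D^2 \<le> 0" and a4: "T = s^2 + 2 * s * e + e^2" and a5: "L = m * e^2"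
      have "- (2 * m * u) * T + 2 * m * s^2 * (u + 2 * u^2) + L = m * (- 2 * u * (2 * s * e + e^2) + 4 * s^2 * u^2 + e^2)"
        unfolding a4 a5 by (simp add: algebra_simps power2_eq_square)
      also have "\<dots> \<le> 0" unfolding a2 by (rule mult_nonneg_nonpos) (use a3 m1 in auto)
      finally show "- (2 * m * u) * T + 2 * m * s^2 * (exp u - 1) \<le> - L" using a1 by linarith
    qed
    then show ?thesis by simp
  qed
  also have "\<dots> = \<delta>" unfolding L_def using d0 by (simp add: ln_div)
  finally show ?thesis unfolding s_def e_def L_def m_def .
qed

lemma lower_tail:
  assumes n2: "n \<ge> 2" and d0: "0 < \<delta>" and d1: "\<delta> < 1"
  shows "prob {w \<in> space M. sqrt (sample_var n X w) + sqrt (ln (1/\<delta>) / real (n div 2)) < sqrt (law_variance F)} \<le> \<delta>"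
proof -
  define m where "m = real (n div 2)"
  define L where "L = ln (1/\<delta>)"
  define e where "e = sqrt (L / m)"
  define s where "s = sqrt (law_variance F)"
  have m1: "m \<ge> 1" using n2 unfolding m_def by simp
  have L0: "L > 0" unfolding L_def using d0 d1 by simp
  have e0: "e > 0" unfolding e_def using L0 m1 by simp
  have e2: "e^2 = L / m" unfolding e_def using L0 m1 by simp
  have s0: "s \<ge> 0" unfolding s_def using V_nonneg by simp
  have V: "law_variance F = s^2" unfolding s_def by (rule real_sqrt_pow2[OF V_nonneg, symmetric])
  show ?thesis
  proof (cases "s \<le> e")
    case True
    have E: "{w \<in> space M. sqrt (sample_var n X w) + e < s} = {}"
    proof (intro equals0I)
      fix w assume "w \<in> {w \<in> space M. sqrt (sample_var n X w) + e < s}"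
      then have w: "w \<in> space M" and lt: "sqrt (sample_var n X w) + e < s" by auto
      have "0 \<le> sqrt (sample_var n X w)" using S_range[OF n2 w] by simp
      then show False using lt True by linarith
    qed
    have "prob {w \<in> space M. sqrt (sample_var n X w) + e < s} \<le> \<delta>" unfolding E using d0 by simp
    then show ?thesis unfolding s_def e_def L_def m_def .
  next
    case False
    then have se: "e < s" by simp
    define T where "T = (s - e)^2"
    define u where "u = e / s"
    define lam where "lam = 2 * m * u"
    have u0: "0 \<le> u" unfolding u_def using e0 s0 by simp
    have lam0: "lam > 0" unfolding lam_def u_def using m1 e0 se by simp
    have sub: "{w \<in> space M. sqrt (sample_var n X w) + e < s} \<subseteq> {w \<in> space M. sample_var n X w \<le> T}"
    proof safe
      fix w assume w: "w \<in> space M" and lt: "sqrt (sample_var n X w) + e < s"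
      have "(sqrt (sample_var n X w))^2 \<le> (s - e)^2" using lt S_range[OF n2 w] by (intro power_mono) auto
      then show "sample_var n X w \<le> T" unfolding T_def using S_range[OF n2 w] by simp
    qed
    have "prob {w \<in> space M. sqrt (sample_var n X w) + e < s} \<le> prob {w \<in> space M. sample_var n X w \<le> T}"
      by (rule finite_measure_mono[OF sub]) measurable
    also have "\<dots> \<le> exp (lam * T) * (\<integral>w\<in>space M. exp (- lam * sample_var n X w) \<partial>M)"
      by (rule Chernoff_ineq_le[OF lam0 set_int_space[OF expS_integrable[OF n2]]]) simp
    also have "\<dots> = exp (lam * T) * expectation (\<lambda>w. exp (- lam * sample_var n X w))"
      using set_integral_space[OF expS_integrable[OF n2, of "- lam"]] by simp
    also have "\<dots> \<le> exp (lam * T) * exp (2 * m * law_variance F * (exp (- lam / (2 * m)) - 1))"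
      by (rule mult_left_mono) (use mgf_S[OF n2, of "- lam"] in \<open>auto simp: m_def\<close>)
    also have "\<dots> = exp (lam * T + 2 * m * s^2 * (exp (- u) - 1))"
    proof -
      have "- lam / (2 * m) = - u" unfolding lam_def using m1 by simp
      then show ?thesis by (simp add: V exp_add)
    qed
    also have "\<dots> \<le> exp (- L)"
    proof -
      have "exp (- u) - 1 \<le> - u + u^2 / 2" using exp_neg_upper[OF u0] by simp
      then have a1: "2 * m * s^2 * (exp (- u) - 1) \<le> 2 * m * s^2 * (- u + u^2 / 2)"
        using m1 by (intro mult_left_mono) auto
      have a2: "2 * u * (s - e)^2 - 2 * s^2 * u + s^2 * u^2 = - 3 * e^2 + 2 * e^3 / s"
        unfolding u_def by (rule key2[OF se e0])
      have a3: "e^3 / s \<le> e^2"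
        by (rule key3[OF se e0])
      have a5: "L = m * e^2" using e2 m1 by simp
      have "lam * T + 2 * m * s^2 * (- u + u^2 / 2) + L = m * (2 * u * (s - e)^2 - 2 * s^2 * u + s^2 * u^2 + e^2)"
        unfolding lam_def T_def a5 by (simp add: algebra_simps power2_eq_square)
      also have "\<dots> = m * (- 2 * e^2 + 2 * e^3 / s)" unfolding a2 by simp
      also have "\<dots> \<le> 0" using a3 m1 by (simp add: mult_nonneg_nonpos)
      finally have "lam * T + 2 * m * s^2 * (exp (- u) - 1) \<le> - L" using a1 by linarith
      then show ?thesis by simp
    qed
    also have "\<dots> = \<delta>" unfolding L_def using d0 by (simp add: ln_div)
    finally show ?thesis unfolding s_def e_def L_def m_def .
  qed
qed

end



theorem proposition2:
  fixes M :: "'a measure" and X :: "nat \<Rightarrow> 'a \<Rightarrow> real" and F :: "real measure"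
    and n :: nat and \<delta> :: real
  assumes "prob_space M"
    and "n \<ge> 2"
    and "\<forall>i<n. X i \<in> borel_measurable M"
    and "prob_space.indep_vars M (\<lambda>_. borel) X {..<n}"
    and "\<forall>i<n. distr M borel (X i) = F"
    and "\<forall>i<n. \<forall>w\<in>space M. X i w \<in> {0..1}"
    and "0 < \<delta>" and "\<delta> < 1"
  shows "measure M {w \<in> space M. sqrt (sample_var n X w) \<le> sqrt (law_variance F)
            + (sqrt 2 / 2 + sqrt 6 / 6) * sqrt (1 / real_of_int \<lfloor>real n / 2\<rfloor> * ln (1 / \<delta>))}
          \<ge> 1 - \<delta>
       \<and> measure M {w \<in> space M. sqrt (law_variance F) \<le> sqrt (sample_var n X w)
            + (sqrt 2 / 2 + sqrt 42 / 6) * sqrt (1 / real_of_int \<lfloor>real n / 2\<rfloor> * ln (1 / \<delta>))}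
          \<ge> 1 - \<delta>"
proof -
  have I: "iid M X n F"
  proof (rule iid.intro[OF assms(1)], rule iid_axioms.intro)
    show "\<And>i. i < n \<Longrightarrow> X i \<in> borel_measurable M" using assms(3) by blast
    show "prob_space.indep_vars M (\<lambda>_. borel) X {..<n}" by (rule assms(4))
    show "\<And>i. i < n \<Longrightarrow> distr M borel (X i) = F" using assms(5) by blast
    show "\<And>i w. i < n \<Longrightarrow> w \<in> space M \<Longrightarrow> X i w \<in> {0..1}" using assms(6) by blast
  qed
  interpret iid M X n F by (rule I)
  note n2 = assms(2) and d0 = assms(7) and d1 = assms(8)
  define e where "e = sqrt (ln (1/\<delta>) / real (n div 2))"
  define s where "s = sqrt (law_variance F)"
  have fl: "real_of_int \<lfloor>real n / 2\<rfloor> = real (n div 2)"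
    using floor_divide_of_nat_eq[of n 2, where 'a = real] by simp
  have eq_e: "sqrt (1 / real_of_int \<lfloor>real n / 2\<rfloor> * ln (1 / \<delta>)) = e"
    unfolding fl e_def by simp
  have e0: "0 \<le> e" unfolding e_def using d0 d1 by simp
  have sq2: "sqrt 2 \<ge> 1.4" by (rule real_le_rsqrt) (simp add: power2_eq_square)
  have sq6: "sqrt 6 \<ge> 2.4" by (rule real_le_rsqrt) (simp add: power2_eq_square)
  have sq42: "sqrt 42 \<ge> 6" by (rule real_le_rsqrt) (simp add: power2_eq_square)
  have c1: "1 \<le> sqrt 2 / 2 + sqrt 6 / 6" using sq2 sq6 by simp
  have "0 \<le> sqrt (2::real)" by simp
  then have c2: "1 \<le> sqrt 2 / 2 + sqrt 42 / 6" using sq42 by linarith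
  have ce1: "e \<le> (sqrt 2 / 2 + sqrt 6 / 6) * e" using c1 e0 by (simp add: mult_le_cancel_right1)
  have ce2: "e \<le> (sqrt 2 / 2 + sqrt 42 / 6) * e" using c2 e0 by (simp add: mult_le_cancel_right1)
  have part1: "prob {w \<in> space M. sqrt (sample_var n X w) \<le> s + e} \<ge> 1 - \<delta>"
  proof -
    have ev: "{w \<in> space M. s + e < sqrt (sample_var n X w)} \<in> events" by measurable
    have "space M - {w \<in> space M. s + e < sqrt (sample_var n X w)} = {w \<in> space M. sqrt (sample_var n X w) \<le> s + e}"
      by auto
    then have "prob {w \<in> space M. sqrt (sample_var n X w) \<le> s + e} = 1 - prob {w \<in> space M. s + e < sqrt (sample_var n X w)}"
      using prob_compl[OF ev] by simp
    moreover have "prob {w \<in> space M. s + e < sqrt (sample_var n X w)} \<le> \<delta>"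
      using upper_tail[OF n2 d0 d1] unfolding s_def e_def .
    ultimately show ?thesis by simp
  qed
  have part2: "prob {w \<in> space M. s \<le> sqrt (sample_var n X w) + e} \<ge> 1 - \<delta>"
  proof -
    have ev: "{w \<in> space M. sqrt (sample_var n X w) + e < s} \<in> events" by measurable
    have "space M - {w \<in> space M. sqrt (sample_var n X w) + e < s} = {w \<in> space M. s \<le> sqrt (sample_var n X w) + e}"
      by auto
    then have "prob {w \<in> space M. s \<le> sqrt (sample_var n X w) + e} = 1 - prob {w \<in> space M. sqrt (sample_var n X w) + e < s}"
      using prob_compl[OF ev] by simp
    moreover have "prob {w \<in> space M. sqrt (sample_var n X w) + e < s} \<le> \<delta>"
      using lower_tail[OF n2 d0 d1] unfolding s_def e_def .
    ultimately show ?thesis by simp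
  qed
  have r1: "prob {w \<in> space M. sqrt (sample_var n X w) \<le> s + e}
     \<le> prob {w \<in> space M. sqrt (sample_var n X w) \<le> s + (sqrt 2 / 2 + sqrt 6 / 6) * e}"
    by (rule finite_measure_mono) (use ce1 in auto)
  have r2: "prob {w \<in> space M. s \<le> sqrt (sample_var n X w) + e}
     \<le> prob {w \<in> space M. s \<le> sqrt (sample_var n X w) + (sqrt 2 / 2 + sqrt 42 / 6) * e}"
    by (rule finite_measure_mono) (use ce2 in auto)
  have g1: "prob {w \<in> space M. sqrt (sample_var n X w) \<le> s + (sqrt 2 / 2 + sqrt 6 / 6) * e} \<ge> 1 - \<delta>"
    using part1 r1 by linarith
  have g2: "prob {w \<in> space M. s \<le> sqrt (sample_var n X w) + (sqrt 2 / 2 + sqrt 42 / 6) * e} \<ge> 1 - \<delta>"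
    using part2 r2 by linarith
  show ?thesis unfolding eq_e using g1 g2 unfolding s_def by simp
qed


end
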